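(* Let $k\to A$ be a homomorphism of noetherian rings and $M_1,M_2$ finitely generated $A$-modules, and let $\widetilde D:\mathcal J^N(M_1/k)\to M_2$ be an $A$-linear map for some $N\in\mathbb N_0$. (1) If $\operatorname{ann}(M_2)=I$, there is some $K\in\mathbb N$ such that $\widetilde D$ factors over a map $\widetilde{D'}:\mathcal J^N((M_1/I^KM_1)/k)\to M_2$ (through the natural surjection $\mathcal J^N(M_1/k)\to\mathcal J^N((M_1/I^KM_1)/k)$). (2) If $\operatorname{ann}(M_1)=I$, there is some $K\in\mathbb N$ such that the image of $\widetilde D$ is a submodule annihilated by $I^K$.
   Context: For a ring homomorphism $k\to A$ and an $A$-module $M$, $I_{A/k}=\ker(A\otimes_kA\to A)$ and $\mathcal J^N(M/k)=(A\otimes_kM)/I_{A/k}^{N+1}(A\otimes_kM)$; "$A$-linear" refers to the $A$-module structure of $\mathcal J^N(M/k)$ via the first factor $a\mapsto a\otimes1$. *)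

theory Defs
  imports Main "HOL.Modules" "HOL-Library.Poly_Mapping"
begin

definition lspan :: "('a::comm_ring_1 \<Rightarrow> 'b::ab_group_add \<Rightarrow> 'b) \<Rightarrow> 'b set \<Rightarrow> 'b set" where
  "lspan s S = {(\<Sum>v\<in>t. s (r v) v) | t r. finite t \<and> t \<subseteq> S}"

definition is_ideal :: "'a::comm_ring_1 set \<Rightarrow> bool" where
  "is_ideal I \<longleftrightarrow> 0 \<in> I \<and> (\<forall>x\<in>I. \<forall>y\<in>I. x + y \<in> I) \<and> (\<forall>r. \<forall>x\<in>I. r * x \<in> I)"

definition noetherian_ring :: "'a::comm_ring_1 itself \<Rightarrow> bool" where
  "noetherian_ring _ \<longleftrightarrow>
     (\<forall>I::'a set. is_ideal I \<longrightarrow> (\<exists>S. finite S \<and> S \<subseteq> I \<and> I = lspan (*) S))"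

definition ring_hom_fun :: "('k::comm_ring_1 \<Rightarrow> 'a::comm_ring_1) \<Rightarrow> bool" where
  "ring_hom_fun f \<longleftrightarrow> f 1 = 1 \<and> (\<forall>x y. f (x + y) = f x + f y) \<and> (\<forall>x y. f (x * y) = f x * f y)"

definition fin_gen_module :: "('a::comm_ring_1 \<Rightarrow> 'm::ab_group_add \<Rightarrow> 'm) \<Rightarrow> bool" where
  "fin_gen_module s \<longleftrightarrow> (\<exists>S. finite S \<and> lspan s S = UNIV)"

definition ann :: "('a::comm_ring_1 \<Rightarrow> 'm::ab_group_add \<Rightarrow> 'm) \<Rightarrow> 'a set" where
  "ann s = {a. \<forall>m. s a m = 0}"

definition ideal_pow :: "'a::comm_ring_1 set \<Rightarrow> nat \<Rightarrow> 'a set" where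
  "ideal_pow I K = lspan (*) {prod_list xs | xs. length xs = K \<and> set xs \<subseteq> I}"

definition ideal_smult :: "('a::comm_ring_1 \<Rightarrow> 'm::ab_group_add \<Rightarrow> 'm) \<Rightarrow> 'a set \<Rightarrow> 'm set" where
  "ideal_smult s J = lspan s {s a m | a m. a \<in> J}"

definition coset :: "'m::ab_group_add set \<Rightarrow> 'm \<Rightarrow> 'm set" where
  "coset L m = {m + l | l. l \<in> L}"

definition qcarrier :: "'m::ab_group_add set \<Rightarrow> 'm set set" where
  "qcarrier L = {coset L m | m. True}"

definition qplus :: "'m::ab_group_add set \<Rightarrow> 'm set \<Rightarrow> 'm set" where
  "qplus X Y = {x + y | x y. x \<in> X \<and> y \<in> Y}"

definition qscale :: "('a \<Rightarrow> 'm::ab_group_add \<Rightarrow> 'm) \<Rightarrow> 'm set \<Rightarrow> 'a \<Rightarrow> 'm set \<Rightarrow> 'm set" where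
  "qscale s L a X = {s a x + l | x l. x \<in> X \<and> l \<in> L}"

text \<open>A module is given by a carrier C, an addition pl and a scalar multiplication sc by A.
  The free abelian group on A \<times> C is represented by finitely supported int-valued functions on pairs
  restricted to supports in A \<times> C.\<close>

inductive_set zspan :: "('b \<Rightarrow>\<^sub>0 int) set \<Rightarrow> ('b \<Rightarrow>\<^sub>0 int) set" for X where
  zspan_zero: "0 \<in> zspan X"
| zspan_gen: "x \<in> X \<Longrightarrow> x \<in> zspan X"
| zspan_diff: "x \<in> zspan X \<Longrightarrow> y \<in> zspan X \<Longrightarrow> x - y \<in> zspan X"

definition free_on :: "'m set \<Rightarrow> (('a \<times> 'm) \<Rightarrow>\<^sub>0 int) set" where
  "free_on C = {u. Poly_Mapping.keys u \<subseteq> UNIV \<times> C}"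

text \<open>Relations defining A \<otimes>_k M as a quotient of the free abelian group on A \<times> M.\<close>
definition tens_rel :: "('k \<Rightarrow> 'a::comm_ring_1) \<Rightarrow> 'm set \<Rightarrow> ('m \<Rightarrow> 'm \<Rightarrow> 'm)
    \<Rightarrow> ('a \<Rightarrow> 'm \<Rightarrow> 'm) \<Rightarrow> (('a \<times> 'm) \<Rightarrow>\<^sub>0 int) set" where
  "tens_rel \<phi> C pl sc =
     {frag_of (a + a', m) - frag_of (a, m) - frag_of (a', m) | a a' m. m \<in> C}
   \<union> {frag_of (a, pl m m') - frag_of (a, m) - frag_of (a, m') | a m m'. m \<in> C \<and> m' \<in> C}
   \<union> {frag_of (a * \<phi> c, m) - frag_of (a, sc (\<phi> c) m) | a c m. m \<in> C}"

text \<open>Action of (a lift of) an element of A \<otimes>_k A on (a lift of) an element of A \<otimes>_k M: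
  (a \<otimes> b)(x \<otimes> m) = ax \<otimes> bm.\<close>
definition tact :: "('a::comm_ring_1 \<Rightarrow> 'm \<Rightarrow> 'm) \<Rightarrow> (('a \<times> 'a) \<Rightarrow>\<^sub>0 int)
    \<Rightarrow> (('a \<times> 'm) \<Rightarrow>\<^sub>0 int) \<Rightarrow> (('a \<times> 'm) \<Rightarrow>\<^sub>0 int)" where
  "tact sc t u = frag_extend (\<lambda>(a, b). frag_extend (\<lambda>(x, m). frag_of (a * x, sc b m)) u) t"

text \<open>Preimage in the free group on A \<times> A of I_{A/k} = ker(A \<otimes>_k A \<rightarrow> A).\<close>
definition diag_ker :: "(('a::comm_ring_1 \<times> 'a) \<Rightarrow>\<^sub>0 int) set" where
  "diag_ker = {t. (\<Sum>p\<in>Poly_Mapping.keys t. of_int (Poly_Mapping.lookup t p) * (fst p * snd p)) = 0}"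

text \<open>Preimage in the free group on A \<times> M of I_{A/k}^{N+1} (A \<otimes>_k M); the quotient by it is J^N(M/k).\<close>
definition jet_ker :: "('k \<Rightarrow> 'a::comm_ring_1) \<Rightarrow> 'm set \<Rightarrow> ('m \<Rightarrow> 'm \<Rightarrow> 'm)
    \<Rightarrow> ('a \<Rightarrow> 'm \<Rightarrow> 'm) \<Rightarrow> nat \<Rightarrow> (('a \<times> 'm) \<Rightarrow>\<^sub>0 int) set" where
  "jet_ker \<phi> C pl sc N = zspan (tens_rel \<phi> C pl sc \<union>
     {List.foldr (tact sc) ts y | ts y. length ts = Suc N \<and> set ts \<subseteq> diag_ker \<and> y \<in> free_on C})"

text \<open>A-module structure on A \<otimes>_k M (and J^N(M/k)) via the first factor.\<close>
definition aact :: "('a::comm_ring_1 \<Rightarrow> 'm \<Rightarrow> 'm) \<Rightarrow> 'a \<Rightarrow> (('a \<times> 'm) \<Rightarrow>\<^sub>0 int) \<Rightarrow> (('a \<times> 'm) \<Rightarrow>\<^sub>0 int)" where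
  "aact sc a u = tact sc (frag_of (a, 1)) u"

text \<open>An A-linear map J^N(M/k) \<rightarrow> M2, represented by its composite with the projection
  from the free group on A \<times> C: additive, A-linear, vanishing on the kernel.\<close>
definition jet_lin :: "('k \<Rightarrow> 'a::comm_ring_1) \<Rightarrow> 'm set \<Rightarrow> ('m \<Rightarrow> 'm \<Rightarrow> 'm)
    \<Rightarrow> ('a \<Rightarrow> 'm \<Rightarrow> 'm) \<Rightarrow> nat \<Rightarrow> ('a \<Rightarrow> 'n::ab_group_add \<Rightarrow> 'n)
    \<Rightarrow> ((('a \<times> 'm) \<Rightarrow>\<^sub>0 int) \<Rightarrow> 'n) \<Rightarrow> bool" where
  "jet_lin \<phi> C pl sc N s2 D \<longleftrightarrow>
     (\<forall>u\<in>free_on C. \<forall>v\<in>free_on C. D (u + v) = D u + D v)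
   \<and> (\<forall>u\<in>jet_ker \<phi> C pl sc N. D u = 0)
   \<and> (\<forall>a. \<forall>u\<in>free_on C. D (aact sc a u) = s2 a (D u))"

definition qproj :: "'m::ab_group_add set \<Rightarrow> (('a \<times> 'm) \<Rightarrow>\<^sub>0 int) \<Rightarrow> (('a \<times> 'm set) \<Rightarrow>\<^sub>0 int)" where
  "qproj L u = frag_extend (\<lambda>(x, m). frag_of (x, coset L m)) u"

end

theory Submission
  imports Defs
begin

lemma lspan_span: "module s \<Longrightarrow> lspan s S = module.span s S"
  by (simp add: lspan_def module.span_explicit)

lemma frag_extend_diff_fun:
  "frag_extend (\<lambda>p. f p - g p) t = frag_extend f t - frag_extend g t"
  using subset_UNIV
  by (induction t rule: frag_induction) (auto simp: frag_extend_diff algebra_simps)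

lemma tact_of: "tact sc (frag_of (a,b)) (frag_of (x,m)) = frag_of (a*x, sc b m)"
  by (simp add: tact_def)

lemma tact_diff_r: "tact sc t (u - v) = tact sc t u - tact sc t v"
  by (simp add: tact_def frag_extend_diff case_prod_unfold frag_extend_diff_fun)

lemma tact_diff_l: "tact sc (t1 - t2) u = tact sc t1 u - tact sc t2 u"
  by (simp add: tact_def frag_extend_diff)

lemma tact_0_r: "tact sc t 0 = 0"
  by (metis diff_self tact_diff_r)

lemma tact_0_l: "tact sc 0 u = 0"
  by (simp add: tact_def)

lemma foldr_tact_diff: "foldr (tact sc) ts (u - v) = foldr (tact sc) ts u - foldr (tact sc) ts v"
  by (induction ts) (simp_all add: tact_diff_r)

definition dd :: "'a::comm_ring_1 \<Rightarrow> ('a \<times> 'a) \<Rightarrow>\<^sub>0 int" where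
  "dd a = frag_of (a,1) - frag_of (1,a)"

lemma dd_diag: "dd a \<in> diag_ker"
proof (cases "a = 1")
  case True then show ?thesis by (simp add: dd_def diag_ker_def)
next
  case False
  have k: "Poly_Mapping.keys (dd a) = {(a,1),(1,a)}"
    using False by (auto simp: dd_def in_keys_iff lookup_minus split: if_splits)
  have "(\<Sum>p\<in>{(a,1),(1,a)}. of_int (Poly_Mapping.lookup (dd a) p) * (fst p * snd p)) = (0::'a)"
    using False by (simp add: dd_def lookup_minus)
  then show ?thesis unfolding diag_ker_def mem_Collect_eq k .
qed


context
  fixes \<phi> :: "'k::comm_ring_1 \<Rightarrow> 'a::comm_ring_1"
    and s1 :: "'a \<Rightarrow> 'm1::ab_group_add \<Rightarrow> 'm1"
    and s2 :: "'a \<Rightarrow> 'm2::ab_group_add \<Rightarrow> 'm2"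
    and N :: nat
    and D :: "(('a \<times> 'm1) \<Rightarrow>\<^sub>0 int) \<Rightarrow> 'm2"
  assumes m1: "module s1" and m2: "module s2"
    and J: "jet_lin \<phi> UNIV (+) s1 N s2 D"
begin

lemma free_UNIV: "u \<in> free_on UNIV"
  by (simp add: free_on_def)

lemma Dadd: "D (u + v) = D u + D v"
  using J free_UNIV unfolding jet_lin_def by blast

lemma Dker: "u \<in> jet_ker \<phi> UNIV (+) s1 N \<Longrightarrow> D u = 0"
  using J unfolding jet_lin_def by blast

lemma Dact: "D (aact s1 a u) = s2 a (D u)"
  using J free_UNIV unfolding jet_lin_def by blast

lemma D0: "D 0 = 0"
  using Dadd[of 0 0] by simp

lemma Ddiff: "D (u - v) = D u - D v"
  using Dadd[of "u - v" v] by (simp add: eq_diff_eq)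

lemma Dfrag_of: "D (frag_of (x, n)) = s2 x (D (frag_of (1, n)))"
proof -
  have "aact s1 x (frag_of (1, n)) = frag_of (x, n)"
    using m1 by (simp add: aact_def tact_of module.scale_one)
  then show ?thesis using Dact[of x "frag_of (1,n)"] by simp
qed

lemma Dfrag_add: "D (frag_of (x, m + m')) = D (frag_of (x, m)) + D (frag_of (x, m'))"
proof -
  have "frag_of (x, m + m') - frag_of (x, m) - frag_of (x, m') \<in> jet_ker \<phi> UNIV (+) s1 N"
    unfolding jet_ker_def by (rule zspan_gen, rule UnI1) (unfold tens_rel_def, blast)
  from Dker[OF this] show ?thesis by (simp add: Ddiff Dadd algebra_simps)
qed

lemma Dfrag_zero: "D (frag_of (x, 0)) = 0"
  using Dfrag_add[of x 0 0] by simp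

lemma Dfrag_sum: "finite T \<Longrightarrow> D (frag_of (x, \<Sum>v\<in>T. f v)) = (\<Sum>v\<in>T. D (frag_of (x, f v)))"
  by (induction T rule: finite_induct) (simp_all add: Dfrag_zero Dfrag_add)

lemma foldr_ker: "length as = Suc N \<Longrightarrow> foldr (tact s1) (map dd as) y \<in> jet_ker \<phi> UNIV (+) s1 N"
  unfolding jet_ker_def
  by (rule zspan_gen, rule UnI2) (auto intro!: exI[of _ "map dd as"] simp: dd_diag free_UNIV)

lemma tact_dd: "tact s1 (dd a) (frag_of (x, m)) = frag_of (a * x, m) - frag_of (x, s1 a m)"
  using m1 by (simp add: dd_def tact_diff_l tact_of module.scale_one)

lemma ann_mult: "a \<in> ann s2 \<Longrightarrow> s2 (a * b) n = 0"
  using m2 by (simp add: ann_def module.scale_scale[symmetric])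

lemma core1:
  assumes "set as \<subseteq> ann s2"
  shows "D (foldr (tact s1) (map dd as) (frag_of (x, m))) =
     (if even (length as) then D (frag_of (x, s1 (prod_list as) m)) else - D (frag_of (x, s1 (prod_list as) m)))"
  using assms
proof (induction as arbitrary: x m rule: rev_induct)
  case Nil
  then show ?case using m1 by (simp add: module.scale_one)
next
  case (snoc a as)
  have a: "a \<in> ann s2" using snoc.prems by auto
  have z: "D (frag_of (a * x, s1 (prod_list as) m)) = 0"
    by (subst Dfrag_of) (simp add: ann_mult[OF a])
  have "D (foldr (tact s1) (map dd (as @ [a])) (frag_of (x, m))) =
        D (foldr (tact s1) (map dd as) (frag_of (a * x, m))) - D (foldr (tact s1) (map dd as) (frag_of (x, s1 a m)))"
    by (simp add: tact_dd foldr_tact_diff Ddiff)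
  also have "\<dots> = (if even (length (as @ [a])) then D (frag_of (x, s1 (prod_list (as @ [a])) m)) else - D (frag_of (x, s1 (prod_list (as @ [a])) m)))"
    using snoc.IH[of "a * x" m] snoc.IH[of x "s1 a m"] snoc.prems z m1
    by (simp add: module.scale_scale)
  finally show ?case .
qed

lemma core2:
  assumes "set as \<subseteq> ann s1"
  shows "D (foldr (tact s1) (map dd as) (frag_of (x, m))) = D (frag_of (prod_list as * x, m))"
  using assms
proof (induction as arbitrary: x m rule: rev_induct)
  case Nil
  then show ?case by simp
next
  case (snoc a as)
  have a: "s1 a m = 0" using snoc.prems by (auto simp: ann_def)
  have "D (foldr (tact s1) (map dd (as @ [a])) (frag_of (x, m))) =
        D (foldr (tact s1) (map dd as) (frag_of (a * x, m))) - D (foldr (tact s1) (map dd as) (frag_of (x, s1 a m)))"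
    by (simp add: tact_dd foldr_tact_diff Ddiff)
  also have "\<dots> = D (frag_of (prod_list (as @ [a]) * x, m))"
    using snoc.IH[of "a * x" m] snoc.IH[of x "s1 a m"] snoc.prems a
    by (simp add: Dfrag_zero mult.assoc)
  finally show ?case .
qed


lemma kill1:
  assumes "length xs = Suc N" "set xs \<subseteq> ann s2"
  shows "D (frag_of (x, s1 (prod_list xs) m)) = 0"
  using core1[OF assms(2), of x m] Dker[OF foldr_ker[OF assms(1)]]
  by (auto split: if_splits)

lemma kill_pow1:
  assumes "a \<in> ideal_pow (ann s2) (Suc N)"
  shows "D (frag_of (x, s1 a m)) = 0"
proof -
  obtain t r where t: "a = (\<Sum>v\<in>t. r v * v)" "finite t"
     "t \<subseteq> {prod_list xs | xs. length xs = Suc N \<and> set xs \<subseteq> ann s2}"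
    using assms unfolding ideal_pow_def lspan_def by blast
  have "s1 a m = (\<Sum>v\<in>t. s1 v (s1 (r v) m))"
    unfolding t(1) using m1 by (simp add: module.scale_sum_left) (intro sum.cong refl, simp add: module.scale_scale[OF m1] mult.commute)
  moreover have "D (frag_of (x, s1 v (s1 (r v) m))) = 0" if "v \<in> t" for v
    using t(3) that kill1 by blast
  ultimately show ?thesis using t(2) by (simp add: Dfrag_sum)
qed

lemma kill_L1:
  assumes "l \<in> ideal_smult s1 (ideal_pow (ann s2) (Suc N))"
  shows "D (frag_of (x, l)) = 0"
proof -
  obtain t r where t: "l = (\<Sum>v\<in>t. s1 (r v) v)" "finite t"
     "t \<subseteq> {s1 a m | a m. a \<in> ideal_pow (ann s2) (Suc N)}"
    using assms unfolding ideal_smult_def lspan_def by blast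
  have "D (frag_of (x, s1 (r v) v)) = 0" if vt: "v \<in> t" for v
  proof -
    obtain a m where v: "v = s1 a m" "a \<in> ideal_pow (ann s2) (Suc N)" using t(3) vt by blast
    have "s1 (r v) v = s1 a (s1 (r v) m)" using m1 v(1) by (simp add: module.scale_scale mult.commute)
    then show ?thesis using kill_pow1[OF v(2)] by simp
  qed
  then show ?thesis using t(1,2) by (simp add: Dfrag_sum)
qed

lemma part2_prod:
  assumes "length xs = Suc N" "set xs \<subseteq> ann s1"
  shows "s2 (prod_list xs) (D u) = 0"
  using subset_UNIV
proof (induction u rule: frag_induction)
  case zero
  then show ?case using m2 by (simp add: D0 module.scale_zero_right)
next
  case (one p)
  obtain x m where p: "p = (x, m)" by force
  have "s2 (prod_list xs) (D (frag_of p)) = D (aact s1 (prod_list xs) (frag_of p))"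
    by (simp add: Dact)
  also have "\<dots> = D (frag_of (prod_list xs * x, m))"
    using m1 by (simp add: p aact_def tact_of module.scale_one)
  also have "\<dots> = 0"
    using core2[OF assms(2), of x m] Dker[OF foldr_ker[OF assms(1)]] by simp
  finally show ?case .
next
  case (diff a b)
  then show ?case using m2 by (simp add: Ddiff module.scale_right_diff_distrib)
qed

lemma part2:
  assumes "a \<in> ideal_pow (ann s1) (Suc N)"
  shows "s2 a (D u) = 0"
proof -
  obtain t r where t: "a = (\<Sum>v\<in>t. r v * v)" "finite t"
     "t \<subseteq> {prod_list xs | xs. length xs = Suc N \<and> set xs \<subseteq> ann s1}"
    using assms unfolding ideal_pow_def lspan_def by blast
  have "s2 a (D u) = (\<Sum>v\<in>t. s2 (r v) (s2 v (D u)))"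
    unfolding t(1) using m2 by (simp add: module.scale_sum_left module.scale_scale[OF m2])
  moreover have "s2 v (D u) = 0" if "v \<in> t" for v
    using t(3) that part2_prod by blast
  ultimately show ?thesis using m2 by (simp add: module.scale_zero_right)
qed

end


context
  fixes s1 :: "'a::comm_ring_1 \<Rightarrow> 'm1::ab_group_add \<Rightarrow> 'm1" and L :: "'m1 set"
  assumes m1: "module s1" and LS: "\<exists>S. L = module.span s1 S"
begin

lemma L0: "0 \<in> L" using LS m1 module.span_zero by blast
lemma Ladd: "x \<in> L \<Longrightarrow> y \<in> L \<Longrightarrow> x + y \<in> L" using LS m1 module.span_add by blast
lemma Lscale: "x \<in> L \<Longrightarrow> s1 r x \<in> L" using LS m1 module.span_scale by blast
lemma Ldiff: "x \<in> L \<Longrightarrow> y \<in> L \<Longrightarrow> x - y \<in> L" using LS m1 module.span_diff by blast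

lemma cos_self: "m \<in> coset L m"
  unfolding coset_def using L0 by force

lemma cos_plus: "qplus (coset L m) (coset L m') = coset L (m + m')"
proof (rule set_eqI)
  fix z
  have 1: "z \<in> coset L (m + m')" if "z = m + l + (m' + l')" "l \<in> L" "l' \<in> L" for l l'
    unfolding coset_def using that Ladd[of l l'] by (auto intro!: exI[of _ "l + l'"] simp: algebra_simps)
  have 2: "z \<in> qplus (coset L m) (coset L m')" if "z = m + m' + l" "l \<in> L" for l
  proof -
    have "z = (m + l) + (m' + 0)" using that by (simp add: algebra_simps)
    then show ?thesis unfolding qplus_def coset_def using that L0 by blast
  qed
  show "z \<in> qplus (coset L m) (coset L m') \<longleftrightarrow> z \<in> coset L (m + m')"
    using 1 2 unfolding qplus_def coset_def by blast
qed

lemma cos_scale: "qscale s1 L r (coset L m) = coset L (s1 r m)"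
proof (rule set_eqI)
  fix z
  have 1: "z \<in> coset L (s1 r m)" if "z = s1 r (m + l) + l'" "l \<in> L" "l' \<in> L" for l l'
    unfolding coset_def using that m1 Ladd[OF Lscale[of l r] that(3)]
    by (auto intro!: exI[of _ "s1 r l + l'"] simp: module.scale_right_distrib add.assoc)
  have 2: "z \<in> qscale s1 L r (coset L m)" if "z = s1 r m + l" "l \<in> L" for l
    unfolding qscale_def using that cos_self[of m] by blast
  show "z \<in> qscale s1 L r (coset L m) \<longleftrightarrow> z \<in> coset L (s1 r m)"
    using 1 2 unfolding qscale_def coset_def by blast
qed

lemma cos_eq: "coset L m = coset L m' \<Longrightarrow> \<exists>l\<in>L. m = m' + l"
  using cos_self[of m] unfolding coset_def by auto

lemma qproj_of: "qproj L (frag_of (x, m)) = frag_of (x, coset L m)"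
  by (simp add: qproj_def)

lemma qproj_diff: "qproj L (u - v) = qproj L u - qproj L v"
  by (simp add: qproj_def frag_extend_diff)

lemma qproj_tact: "qproj L (tact s1 t u) = tact (qscale s1 L) t (qproj L u)"
proof -
  have "\<forall>u. qproj L (tact s1 t u) = tact (qscale s1 L) t (qproj L u)"
    using subset_UNIV
  proof (induction t rule: frag_induction)
    case zero then show ?case by (simp add: tact_0_l qproj_def)
  next
    case (one p)
    obtain a b where p: "p = (a, b)" by force
    show ?case
    proof
      fix u
      show "qproj L (tact s1 (frag_of p) u) = tact (qscale s1 L) (frag_of p) (qproj L u)"
        using subset_UNIV
      proof (induction u rule: frag_induction)
        case zero then show ?case by (simp add: tact_0_r qproj_def)
      next
        case (one q)
        obtain x m where q: "q = (x, m)" by force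
        show ?case by (simp add: p q tact_of qproj_of cos_scale)
      next
        case (diff u v)
        then show ?case by (simp add: tact_diff_r qproj_diff)
      qed
    qed
  next
    case (diff a b)
    then show ?case by (simp add: tact_diff_l qproj_diff)
  qed
  then show ?thesis by blast
qed

lemma qproj_foldr: "qproj L (foldr (tact s1) ts u) = foldr (tact (qscale s1 L)) ts (qproj L u)"
  by (induction ts) (simp_all add: qproj_tact)

definition qrep :: "'m1 set \<Rightarrow> 'm1" where "qrep X = (SOME m. X = coset L m)"
definition qlift :: "(('b \<times> 'm1 set) \<Rightarrow>\<^sub>0 int) \<Rightarrow> (('b \<times> 'm1) \<Rightarrow>\<^sub>0 int)" where
  "qlift v = frag_extend (\<lambda>(x, X). frag_of (x, qrep X)) v"

lemma qrep_cos: "coset L (qrep (coset L m)) = coset L m"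
  unfolding qrep_def by (rule someI_ex[where P = "\<lambda>m'. coset L m = coset L m'", symmetric]) blast

lemma qproj_qlift:
  assumes "y \<in> free_on (qcarrier L)"
  shows "qproj L (qlift y) = y"
proof -
  have "qproj L (qlift y) = frag_extend (\<lambda>(x, X). frag_of (x, coset L (qrep X))) y"
    unfolding qlift_def qproj_def
    using frag_extend_compose[of "\<lambda>(x, m). frag_of (x, coset L m)" "\<lambda>(x, X). (x, qrep X)" y]
    by (simp add: o_def case_prod_unfold)
  also have "\<dots> = frag_extend frag_of y"
  proof (rule frag_extend_eq)
    fix p assume "p \<in> Poly_Mapping.keys y"
    then obtain x m where p: "p = (x, coset L m)"
      using assms unfolding free_on_def qcarrier_def by blast
    show "(\<lambda>(x, X). frag_of (x, coset L (qrep X))) p = frag_of p"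
      by (simp add: p qrep_cos)
  qed
  also have "\<dots> = y" by (rule frag_expansion[symmetric])
  finally show ?thesis .
qed

lemma qlift_qproj: "qlift (qproj L w) = frag_extend (\<lambda>(x, m). frag_of (x, qrep (coset L m))) w"
  unfolding qlift_def qproj_def
  using frag_extend_compose[of "\<lambda>(x, X). frag_of (x, qrep X)" "\<lambda>(x, m). (x, coset L m)" w]
  by (simp add: o_def case_prod_unfold)

lemma qlift_diff: "qlift (u - v) = qlift u - qlift v"
  by (simp add: qlift_def frag_extend_diff)

lemma qlift_add: "qlift (u + v) = qlift u + qlift v"
  by (simp add: qlift_def frag_extend_add)

end


lemma D_frag_extend:
  assumes "\<And>p. D (h p) = D (frag_of p)" and Dd: "\<And>u v. D (u - v) = D u - D v"
  shows "D (frag_extend h w) = D w"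
  using subset_UNIV
proof (induction w rule: frag_induction)
  case zero
  then show ?case by simp
next
  case (one x)
  then show ?case using assms by simp
next
  case (diff a b)
  then show ?case by (simp add: frag_extend_diff Dd)
qed

theorem mainTheorem20:
  fixes \<phi> :: "'k::comm_ring_1 \<Rightarrow> 'a::comm_ring_1"
    and s1 :: "'a \<Rightarrow> 'm1::ab_group_add \<Rightarrow> 'm1"
    and s2 :: "'a \<Rightarrow> 'm2::ab_group_add \<Rightarrow> 'm2"
    and N :: nat
    and I :: "'a set"
    and D :: "(('a \<times> 'm1) \<Rightarrow>\<^sub>0 int) \<Rightarrow> 'm2"
  assumes "noetherian_ring TYPE('k)" and "noetherian_ring TYPE('a)"
    and "ring_hom_fun \<phi>"
    and "Modules.module s1" and "Modules.module s2"
    and "fin_gen_module s1" and "fin_gen_module s2"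
    and "jet_lin \<phi> UNIV (+) s1 N s2 D"
  shows "(ann s2 = I \<longrightarrow>
            (\<exists>K\<ge>1. \<exists>D'. jet_lin \<phi> (qcarrier (ideal_smult s1 (ideal_pow I K))) qplus
                          (qscale s1 (ideal_smult s1 (ideal_pow I K))) N s2 D'
                    \<and> (\<forall>u. D u = D' (qproj (ideal_smult s1 (ideal_pow I K)) u))))
       \<and> (ann s1 = I \<longrightarrow>
            (\<exists>K\<ge>1. \<forall>a\<in>ideal_pow I K. \<forall>u. s2 a (D u) = 0))"
proof (intro conjI impI)
  note m1 = assms(4) and m2 = assms(5) and J = assms(8)
  assume "ann s1 = I"
  then show "\<exists>K\<ge>1. \<forall>a\<in>ideal_pow I K. \<forall>u. s2 a (D u) = 0"
    using part2[OF m1 m2 J] by (intro exI[of _ "Suc N"]) auto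
next
  note m1 = assms(4) and m2 = assms(5) and J = assms(8)
  assume I: "ann s2 = I"
  define L where "L = ideal_smult s1 (ideal_pow I (Suc N))"
  have LS: "\<exists>S. L = module.span s1 S"
    unfolding L_def ideal_smult_def lspan_span[OF m1] by blast
  have killL: "D (frag_of (x, l)) = 0" if "l \<in> L" for x l
    using kill_L1[OF m1 m2 J] that unfolding L_def I[symmetric] by blast
  define D' where "D' v = D (qlift L v)" for v
  have Dd: "D (u - v) = D u - D v" for u v using Ddiff[OF m1 m2 J] .
  have DQ: "D' (qproj L w) = D w" for w
  proof -
    have "D (frag_of (x, qrep L (coset L m))) = D (frag_of (x, m))" for x m
    proof -
      obtain l where l: "l \<in> L" "qrep L (coset L m) = m + l"
        using cos_eq[OF m1 LS qrep_cos[OF m1 LS, of m]] by blast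
      show ?thesis using l killL[OF l(1)] Dfrag_add[OF m1 m2 J] by simp
    qed
    then show ?thesis
      unfolding D'_def qlift_qproj[OF m1 LS]
      by (intro D_frag_extend Dd) (auto simp: case_prod_unfold)
  qed
  have surjQ: "u = qproj L (qlift L u)" if "u \<in> free_on (qcarrier L)" for u
    using qproj_qlift[OF m1 LS that] by simp
  have D'd: "D' (u - v) = D' u - D' v" for u v
    unfolding D'_def qlift_diff[OF m1 LS] Dd ..
  have DkerJ: "D g = 0" if "g \<in> jet_ker \<phi> UNIV (+) s1 N" for g
    using Dker[OF m1 m2 J that] .
  have gens: "g \<in> jet_ker \<phi> UNIV (+) s1 N" if "g \<in> tens_rel \<phi> UNIV (+) s1" for g
    unfolding jet_ker_def using that by (intro zspan_gen) blast
  let ?Q = "qcarrier L" and ?sc = "qscale s1 L"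
  have qc: "\<exists>m. X = coset L m" if "X \<in> qcarrier L" for X
    using that unfolding qcarrier_def by blast
  have kerQ: "D' g = 0" if "g \<in> jet_ker \<phi> ?Q qplus ?sc N" for g
    using that unfolding jet_ker_def
  proof (induction g rule: zspan.induct)
    case zspan_zero
    then show ?case using DQ[of 0] by (simp add: qproj_def D0[OF m1 m2 J])
  next
    case (zspan_diff x y)
    then show ?case by (simp add: D'd)
  next
    case (zspan_gen g)
    then consider
        (t1) a a' X where "g = frag_of (a + a', X) - frag_of (a, X) - frag_of (a', X)" "X \<in> ?Q"
      | (t2) a X Y where "g = frag_of (a, qplus X Y) - frag_of (a, X) - frag_of (a, Y)" "X \<in> ?Q" "Y \<in> ?Q"
      | (t3) a c X where "g = frag_of (a * \<phi> c, X) - frag_of (a, ?sc (\<phi> c) X)" "X \<in> ?Q"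
      | (t4) ts y where "g = foldr (tact ?sc) ts y" "length ts = Suc N" "set ts \<subseteq> diag_ker" "y \<in> free_on ?Q"
      unfolding tens_rel_def by blast
    then show ?case
    proof cases
      case t1
      then obtain m where X: "X = coset L m" using qc by blast
      have "g = qproj L (frag_of (a + a', m) - frag_of (a, m) - frag_of (a', m))"
        by (simp add: t1 X qproj_diff[OF m1 LS] qproj_of[OF m1 LS])
      moreover have "frag_of (a + a', m) - frag_of (a, m) - frag_of (a', m) \<in> tens_rel \<phi> UNIV (+) s1"
        unfolding tens_rel_def by blast
      ultimately show ?thesis using DQ DkerJ gens by metis
    next
      case t2
      then obtain m m' where X: "X = coset L m" "Y = coset L m'" using qc by blast
      have "g = qproj L (frag_of (a, m + m') - frag_of (a, m) - frag_of (a, m'))"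
        by (simp add: t2 X qproj_diff[OF m1 LS] qproj_of[OF m1 LS] cos_plus[OF m1 LS])
      moreover have "frag_of (a, m + m') - frag_of (a, m) - frag_of (a, m') \<in> tens_rel \<phi> UNIV (+) s1"
        unfolding tens_rel_def by blast
      ultimately show ?thesis using DQ DkerJ gens by metis
    next
      case t3
      then obtain m where X: "X = coset L m" using qc by blast
      have "g = qproj L (frag_of (a * \<phi> c, m) - frag_of (a, s1 (\<phi> c) m))"
        by (simp add: t3 X qproj_diff[OF m1 LS] qproj_of[OF m1 LS] cos_scale[OF m1 LS])
      moreover have "frag_of (a * \<phi> c, m) - frag_of (a, s1 (\<phi> c) m) \<in> tens_rel \<phi> UNIV (+) s1"
        unfolding tens_rel_def by blast
      ultimately show ?thesis using DQ DkerJ gens by metis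
    next
      case t4
      have "g = qproj L (foldr (tact s1) ts (qlift L y))"
        using t4 surjQ[OF t4(4)] qproj_foldr[OF m1 LS] by metis
      moreover have "foldr (tact s1) ts (qlift L y) \<in> jet_ker \<phi> UNIV (+) s1 N"
        unfolding jet_ker_def
        by (rule zspan.zspan_gen, rule UnI2) (use t4 free_UNIV[OF m1 m2 J, of "qlift L y"] in blast)
      ultimately show ?thesis using DQ DkerJ by metis
    qed
  qed
  have "jet_lin \<phi> ?Q qplus ?sc N s2 D'"
    unfolding jet_lin_def
  proof (intro conjI ballI allI)
    fix u v
    show "D' (u + v) = D' u + D' v"
      unfolding D'_def qlift_add[OF m1 LS] by (rule Dadd[OF m1 m2 J])
  next
    fix u assume "u \<in> jet_ker \<phi> ?Q qplus ?sc N"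
    then show "D' u = 0" by (rule kerQ)
  next
    fix a and u :: "('a \<times> 'm1 set) \<Rightarrow>\<^sub>0 int" assume u: "u \<in> free_on ?Q"
    have "aact ?sc a u = qproj L (aact s1 a (qlift L u))"
      unfolding aact_def qproj_tact[OF m1 LS] using surjQ[OF u] by metis
    then show "D' (aact ?sc a u) = s2 a (D' u)"
      using DQ Dact[OF m1 m2 J] surjQ[OF u] by metis
  qed
  then show "\<exists>K\<ge>1. \<exists>D'. jet_lin \<phi> (qcarrier (ideal_smult s1 (ideal_pow I K))) qplus
                          (qscale s1 (ideal_smult s1 (ideal_pow I K))) N s2 D'
                    \<and> (\<forall>u. D u = D' (qproj (ideal_smult s1 (ideal_pow I K)) u))"
    using DQ unfolding L_def by (intro exI[of _ "Suc N"] exI[of _ D']) auto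
qed

end
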